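(* For every $N\ge3$ and every choice of settings $X_j,X_j'$ ($j=1,\dots,N$), $|\langle I^N_{CHSH}\rangle|\le 2\sqrt2$. Moreover, if the settings satisfy (ND) and $\langle I^N_{CHSH}\rangle=\pm2\sqrt2$, then $\langle I^2_{CHSH}\rangle=\langle I^N_{CHSH}\rangle$.
   Context: $|G\rangle=\frac{1}{\sqrt2}(|0\cdots0\rangle+|1\cdots1\rangle)$ ($N$ qubits), $|\psi_+\rangle=\frac1{\sqrt2}(|00\rangle+|11\rangle)$, $\vec\sigma=(\sigma_x,\sigma_y,\sigma_z)$ Pauli matrices. For $j=1,\dots,N$: $X_j=\vec n_j\cdot\vec\sigma$, $X_j'=\vec n_j'\cdot\vec\sigma$ with $\vec n_j=(\sin\alpha_j\cos\varphi_j,\sin\alpha_j\sin\varphi_j,\cos\alpha_j)$, $\vec n_j'=(\sin\alpha_j'\cos\varphi_j',\sin\alpha_j'\sin\varphi_j',\cos\alpha_j')$, $\alpha_j,\alpha_j'\in[0,\pi]$. $\mathbb A_0=\bigotimes_{j=1}^{N-1}X_j$, $\mathbb A_1=\bigotimes_{j=1}^{N-1}X_j'$, $\mathbb B_0=X_N$, $\mathbb B_1=X_N'$, and $\langle I^N_{CHSH}\rangle=\sum_{a,b\in\{0,1\}}(-1)^{ab}\langle G|\mathbb A_a\otimes\mathbb B_b|G\rangle$. (ND): $D:=(\prod_{j=1}^{N-1}\cos\alpha_j)^2+(\prod_{j=1}^{N-1}\sin\alpha_j)^2\neq0$, $D':=(\prod_{j=1}^{N-1}\cos\alpha_j')^2+(\prod_{j=1}^{N-1}\sin\alpha_j')^2\neq0$,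 and if $N$ is odd, $\sin\alpha_N\neq0\neq\sin\alpha_N'$. Under (ND): $\varepsilon=D^{-1/2}$, $\varepsilon'=D'^{-1/2}$; $A_0=\vec{\mathrm n}_0\cdot\vec\sigma$, $\vec{\mathrm n}_0=\varepsilon(\prod_{j<N}\sin\alpha_j\cos\beta,\prod_{j<N}\sin\alpha_j\sin\beta,\prod_{j<N}\cos\alpha_j)$, $\beta=\sum_{j=1}^{N-1}\varphi_j$; $A_1$ likewise from primed parameters with $\varepsilon'$. If $N$ even, $B_0=X_N,B_1=X_N'$; if $N$ odd, $B_0=\cos\varphi_N\sigma_x+\sin\varphi_N\sigma_y$, $B_1=\cos\varphi_N'\sigma_x+\sin\varphi_N'\sigma_y$. $\langle I^2_{CHSH}\rangle=\sum_{a,b}(-1)^{ab}\langle\psi_+|A_a\otimes B_b|\psi_+\rangle$. *)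

theory Defs
  imports Complex_Main
begin

text \<open>Single-qubit operators as 2x2 complex matrices indexed by bool
  (False = basis state 0, True = basis state 1): entry (row, column).\<close>
type_synonym qop = "bool \<Rightarrow> bool \<Rightarrow> complex"

definition sigma_x :: qop where
  "sigma_x r c = (if r = c then 0 else 1)"

definition sigma_y :: qop where
  "sigma_y r c = (if r = c then 0 else if r then \<i> else - \<i>)"

definition sigma_z :: qop where
  "sigma_z r c = (if r = c then (if r then -1 else 1) else 0)"

definition bloch_op :: "real \<times> real \<times> real \<Rightarrow> qop" where
  "bloch_op v r c = complex_of_real (fst v) * sigma_x r c
                  + complex_of_real (fst (snd v)) * sigma_y r c
                  + complex_of_real (snd (snd v)) * sigma_z r c"

definition dir :: "real \<Rightarrow> real \<Rightarrow> real \<times> real \<times> real" where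
  "dir al ph = (sin al * cos ph, sin al * sin ph, cos al)"

text \<open>Computational basis of N qubits (sites 1..N): bit strings supported on {1..N}.\<close>
definition basis :: "nat \<Rightarrow> (nat \<Rightarrow> bool) set" where
  "basis N = {b. \<forall>j. b j \<longrightarrow> j \<in> {1..N}}"

text \<open>Matrix entries of the tensor product ops 1 \<otimes> ... \<otimes> ops N.\<close>
definition tensor_op :: "nat \<Rightarrow> (nat \<Rightarrow> qop) \<Rightarrow> (nat \<Rightarrow> bool) \<Rightarrow> (nat \<Rightarrow> bool) \<Rightarrow> complex" where
  "tensor_op N ops r c = (\<Prod>j\<in>{1..N}. ops j (r j) (c j))"

text \<open>GHZ state (|0..0> + |1..1>)/sqrt 2 on N qubits; for N = 2 this is psi_+.\<close>
definition ghz :: "nat \<Rightarrow> (nat \<Rightarrow> bool) \<Rightarrow> complex" where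
  "ghz N b = (if b \<in> basis N \<and> ((\<forall>j\<in>{1..N}. \<not> b j) \<or> (\<forall>j\<in>{1..N}. b j))
              then 1 / complex_of_real (sqrt 2) else 0)"

definition expect :: "nat \<Rightarrow> (nat \<Rightarrow> qop) \<Rightarrow> ((nat \<Rightarrow> bool) \<Rightarrow> complex) \<Rightarrow> complex" where
  "expect N ops psi = (\<Sum>r\<in>basis N. \<Sum>c\<in>basis N. cnj (psi r) * tensor_op N ops r c * psi c)"

text \<open>CHSH expression sum_{a,b} (-1)^{ab} <psi| A_a \<otimes> B_b |psi>, where A a is the
  operator on sites 1..N-1 (given sitewise) and B b acts on site N.\<close>
definition chsh :: "nat \<Rightarrow> (bool \<Rightarrow> nat \<Rightarrow> qop) \<Rightarrow> (bool \<Rightarrow> qop) \<Rightarrow> ((nat \<Rightarrow> bool) \<Rightarrow> complex) \<Rightarrow> complex" where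
  "chsh N A B psi = (\<Sum>a\<in>UNIV. \<Sum>b\<in>UNIV. (if a \<and> b then -1 else 1) *
       expect N (\<lambda>j. if j = N then B b else A a j) psi)"

text \<open>The N-partite CHSH value <I^N_CHSH> for settings X_j = n_j.sigma, X_j' = n_j'.sigma.\<close>
definition chshN :: "nat \<Rightarrow> (nat \<Rightarrow> real) \<Rightarrow> (nat \<Rightarrow> real) \<Rightarrow> (nat \<Rightarrow> real) \<Rightarrow> (nat \<Rightarrow> real) \<Rightarrow> complex" where
  "chshN N al ph al' ph' =
     chsh N (\<lambda>a j. bloch_op (if a then dir (al' j) (ph' j) else dir (al j) (ph j)))
            (\<lambda>b. bloch_op (if b then dir (al' N) (ph' N) else dir (al N) (ph N)))
            (ghz N)"

definition Dval :: "nat \<Rightarrow> (nat \<Rightarrow> real) \<Rightarrow> real" where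
  "Dval N al = (\<Prod>j\<in>{1..N-1}. cos (al j))\<^sup>2 + (\<Prod>j\<in>{1..N-1}. sin (al j))\<^sup>2"

definition ND :: "nat \<Rightarrow> (nat \<Rightarrow> real) \<Rightarrow> (nat \<Rightarrow> real) \<Rightarrow> bool" where
  "ND N al al' \<longleftrightarrow> Dval N al \<noteq> 0 \<and> Dval N al' \<noteq> 0 \<and>
     (odd N \<longrightarrow> sin (al N) \<noteq> 0 \<and> sin (al' N) \<noteq> 0)"

text \<open>Bloch vector of the reduced Alice observable A_0 (resp. A_1 with primed data).\<close>
definition redA :: "nat \<Rightarrow> (nat \<Rightarrow> real) \<Rightarrow> (nat \<Rightarrow> real) \<Rightarrow> real \<times> real \<times> real" where
  "redA N al ph =
     (let eps = 1 / sqrt (Dval N al); beta = (\<Sum>j\<in>{1..N-1}. ph j);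
          S = (\<Prod>j\<in>{1..N-1}. sin (al j)); C = (\<Prod>j\<in>{1..N-1}. cos (al j))
      in (eps * S * cos beta, eps * S * sin beta, eps * C))"

definition redB :: "nat \<Rightarrow> real \<Rightarrow> real \<Rightarrow> real \<times> real \<times> real" where
  "redB N al ph = (if even N then dir al ph else (cos ph, sin ph, 0))"

text \<open>The bipartite CHSH value <I^2_CHSH> in psi_+ for the reduced observables.\<close>
definition chsh2 :: "nat \<Rightarrow> (nat \<Rightarrow> real) \<Rightarrow> (nat \<Rightarrow> real) \<Rightarrow> (nat \<Rightarrow> real) \<Rightarrow> (nat \<Rightarrow> real) \<Rightarrow> complex" where
  "chsh2 N al ph al' ph' =
     chsh 2 (\<lambda>a j. bloch_op (if a then redA N al' ph' else redA N al ph))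
            (\<lambda>b. bloch_op (if b then redB N (al' N) (ph' N) else redB N (al N) (ph N)))
            (ghz 2)"

end

theory Submission
  imports Defs
begin

lemma basis_finite: "finite (basis N)"
proof -
  have "basis N \<subseteq> (\<lambda>S j. j \<in> S) ` Pow {1..N}"
  proof
    fix b assume b: "b \<in> basis N"
    have 1: "b = (\<lambda>j. j \<in> {j. b j})" by simp
    have 2: "{j. b j} \<in> Pow {1..N}" using b unfolding basis_def by blast
    show "b \<in> (\<lambda>S j. j \<in> S) ` Pow {1..N}" using 1 2 by blast
  qed
  then show ?thesis by (rule finite_subset) simp
qed

definition zb :: "nat \<Rightarrow> bool" where "zb = (\<lambda>_. False)"
definition ob :: "nat \<Rightarrow> nat \<Rightarrow> bool" where "ob N = (\<lambda>j. 1 \<le> j \<and> j \<le> N)"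

lemma zb_basis: "zb \<in> basis N" by (simp add: zb_def basis_def)
lemma ob_basis: "ob N \<in> basis N" by (simp add: ob_def basis_def)
lemma zb_ob: "N \<ge> 1 \<Longrightarrow> zb \<noteq> ob N"
  unfolding zb_def ob_def fun_eq_iff by (metis order_refl)

lemma basisD: "b \<in> basis N \<Longrightarrow> b j \<Longrightarrow> 1 \<le> j \<and> j \<le> N"
  unfolding basis_def by simp

lemma ghzA: "(b \<in> basis N \<and> (\<forall>j\<in>{1..N}. \<not> b j)) = (b = zb)"
proof (intro iffI)
  assume h: "b \<in> basis N \<and> (\<forall>j\<in>{1..N}. \<not> b j)"
  have "b j = False" for j
  proof (rule ccontr)
    assume "b j \<noteq> False"
    then have "b j" by simp
    with basisD[of b N j] h show False by simp
  qed
  then show "b = zb" unfolding zb_def by (rule ext)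
next
  assume h: "b = zb"
  have 1: "b \<in> basis N" using zb_basis h by (simp only:)
  have 2: "\<forall>j\<in>{1..N}. \<not> b j" unfolding h zb_def by simp
  show "b \<in> basis N \<and> (\<forall>j\<in>{1..N}. \<not> b j)" using 1 2 by (rule conjI)
qed

lemma ghzB: "(b \<in> basis N \<and> (\<forall>j\<in>{1..N}. b j)) = (b = ob N)"
proof (intro iffI)
  assume h: "b \<in> basis N \<and> (\<forall>j\<in>{1..N}. b j)"
  have "b j = (1 \<le> j \<and> j \<le> N)" for j
  proof
    assume "b j" then show "1 \<le> j \<and> j \<le> N" using basisD h by blast
  next
    assume "1 \<le> j \<and> j \<le> N" then have "j \<in> {1..N}" by simp
    then show "b j" using h by blast
  qed
  then show "b = ob N" unfolding ob_def by (rule ext)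
next
  assume h: "b = ob N"
  have 1: "b \<in> basis N" using ob_basis h by (simp only:)
  have 2: "\<forall>j\<in>{1..N}. b j" unfolding h ob_def by simp
  show "b \<in> basis N \<and> (\<forall>j\<in>{1..N}. b j)" using 1 2 by (rule conjI)
qed

lemma ghz_eq: "ghz N b = (if b = zb \<or> b = ob N then complex_of_real (1 / sqrt 2) else 0)"
proof -
  have "(b \<in> basis N \<and> ((\<forall>j\<in>{1..N}. \<not> b j) \<or> (\<forall>j\<in>{1..N}. b j))) = (b = zb \<or> b = ob N)"
    unfolding conj_disj_distribL ghzA ghzB by (rule refl)
  then show ?thesis unfolding ghz_def by simp
qed

lemma sum_ghz_r: assumes "N \<ge> 1"
  shows "(\<Sum>c\<in>basis N. f c * ghz N c) = (f zb + f (ob N)) * complex_of_real (1 / sqrt 2)"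
proof -
  have "(\<Sum>c\<in>basis N. f c * ghz N c) = (\<Sum>c\<in>{zb, ob N}. f c * ghz N c)"
    by (rule sum.mono_neutral_right) (auto simp: basis_finite zb_basis ob_basis ghz_eq)
  also have "\<dots> = (f zb + f (ob N)) * complex_of_real (1 / sqrt 2)"
    using zb_ob[OF assms] by (simp add: ghz_eq, metis add_divide_distrib)
  finally show ?thesis .
qed

lemma sum_ghz_l: assumes "N \<ge> 1"
  shows "(\<Sum>c\<in>basis N. cnj (ghz N c) * f c) = (f zb + f (ob N)) * complex_of_real (1 / sqrt 2)"
proof -
  have "(\<Sum>c\<in>basis N. cnj (ghz N c) * f c) = (\<Sum>c\<in>{zb, ob N}. cnj (ghz N c) * f c)"
    by (rule sum.mono_neutral_right) (simp_all add: basis_finite zb_basis ob_basis ghz_eq)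
  also have "\<dots> = (f zb + f (ob N)) * complex_of_real (1 / sqrt 2)"
    using zb_ob[OF assms] by (simp add: ghz_eq, metis add_divide_distrib)
  finally show ?thesis .
qed

lemma expect_ghz: assumes "N \<ge> 1"
  shows "expect N ops (ghz N) =
    ((\<Prod>j\<in>{1..N}. ops j False False) + (\<Prod>j\<in>{1..N}. ops j False True)
   + (\<Prod>j\<in>{1..N}. ops j True False) + (\<Prod>j\<in>{1..N}. ops j True True)) / 2"
proof -
  have e: "expect N ops (ghz N) = (\<Sum>r\<in>basis N. cnj (ghz N r) *
      ((tensor_op N ops r zb + tensor_op N ops r (ob N)) * complex_of_real (1 / sqrt 2)))"
    unfolding expect_def
    by (rule sum.cong[OF refl]) (simp add: mult.assoc sum_distrib_left[symmetric] sum_ghz_r[OF assms])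
  have s: "complex_of_real (1 / sqrt 2) * complex_of_real (1 / sqrt 2) = 1/2"
  proof -
    have "(1 / sqrt 2) * (1 / sqrt 2) = (1/2::real)"
      by (simp add: divide_simps)
    then show ?thesis by (metis of_real_mult of_real_divide of_real_1 of_real_numeral)
  qed
  have t1: "tensor_op N ops zb zb = (\<Prod>j\<in>{1..N}. ops j False False)"
    by (simp add: tensor_op_def zb_def)
  have t2: "tensor_op N ops zb (ob N) = (\<Prod>j\<in>{1..N}. ops j False True)"
    by (auto simp: tensor_op_def zb_def ob_def intro!: prod.cong)
  have t3: "tensor_op N ops (ob N) zb = (\<Prod>j\<in>{1..N}. ops j True False)"
    by (auto simp: tensor_op_def zb_def ob_def intro!: prod.cong)
  have t4: "tensor_op N ops (ob N) (ob N) = (\<Prod>j\<in>{1..N}. ops j True True)"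
    by (auto simp: tensor_op_def zb_def ob_def intro!: prod.cong)
  have g: "\<And>a b d e c::complex. ((a+b)*c + (d+e)*c)*c = (a+b+d+e)*(c*c)" by algebra
  show ?thesis unfolding e sum_ghz_l[OF assms] t1 t2 t3 t4 g s by simp
qed


lemma dir_FF: "bloch_op (dir a p) False False = complex_of_real (cos a)"
  by (simp add: bloch_op_def dir_def sigma_x_def sigma_y_def sigma_z_def)
lemma dir_TT: "bloch_op (dir a p) True True = - complex_of_real (cos a)"
  by (simp add: bloch_op_def dir_def sigma_x_def sigma_y_def sigma_z_def)
lemma dir_FT: "bloch_op (dir a p) False True = complex_of_real (sin a) * cis (- p)"
  by (simp add: bloch_op_def dir_def sigma_x_def sigma_y_def sigma_z_def complex_eq_iff)
lemma dir_TF: "bloch_op (dir a p) True False = complex_of_real (sin a) * cis p"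
  by (simp add: bloch_op_def dir_def sigma_x_def sigma_y_def sigma_z_def complex_eq_iff)

lemma prod_cis: "finite A \<Longrightarrow> (\<Prod>j\<in>A. cis (f j)) = cis (sum f A)"
  by (induction A rule: finite_induct) (auto simp: cis_mult)

lemma prod_neg: "finite A \<Longrightarrow> (\<Prod>j\<in>A. - (f j :: complex)) = (-1) ^ card A * prod f A"
  by (induction A rule: finite_induct) auto

lemma expect_dir: assumes "N \<ge> 1"
  shows "expect N (\<lambda>j. bloch_op (dir (f j) (g j))) (ghz N) =
    complex_of_real ((if even N then (\<Prod>j\<in>{1..N}. cos (f j)) else 0)
       + (\<Prod>j\<in>{1..N}. sin (f j)) * cos (\<Sum>j\<in>{1..N}. g j))"
proof -
  have p1: "(\<Prod>j\<in>{1..N}. bloch_op (dir (f j) (g j)) False False) = complex_of_real (\<Prod>j\<in>{1..N}. cos (f j))"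
    by (simp add: dir_FF)
  have p4: "(\<Prod>j\<in>{1..N}. bloch_op (dir (f j) (g j)) True True) = (-1)^N * complex_of_real (\<Prod>j\<in>{1..N}. cos (f j))"
    by (simp add: dir_TT prod_neg)
  have p2: "(\<Prod>j\<in>{1..N}. bloch_op (dir (f j) (g j)) False True) = complex_of_real (\<Prod>j\<in>{1..N}. sin (f j)) * cis (- (\<Sum>j\<in>{1..N}. g j))"
    by (simp add: dir_FT prod.distrib prod_cis sum_negf)
  have p3: "(\<Prod>j\<in>{1..N}. bloch_op (dir (f j) (g j)) True False) = complex_of_real (\<Prod>j\<in>{1..N}. sin (f j)) * cis (\<Sum>j\<in>{1..N}. g j)"
    by (simp add: dir_TF prod.distrib prod_cis)
  have c: "\<And>x. cis (-x) + cis x = 2 * complex_of_real (cos x)"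
    by (simp add: complex_eq_iff)
  define P where "P = (\<Prod>j\<in>{1..N}. cos (f j))"
  define Q where "Q = (\<Prod>j\<in>{1..N}. sin (f j))"
  define G where "G = (\<Sum>j\<in>{1..N}. g j)"
  have eq: "expect N (\<lambda>j. bloch_op (dir (f j) (g j))) (ghz N) =
     (complex_of_real P + complex_of_real Q * (cis (-G) + cis G) + (-1)^N * complex_of_real P) / 2"
    unfolding expect_ghz[OF assms] p1 p2 p3 p4 P_def Q_def G_def by (simp add: algebra_simps)
  show ?thesis unfolding eq P_def[symmetric] Q_def[symmetric] G_def[symmetric] c
    by (cases "even N") (simp_all add: complex_eq_iff)
qed


definition Cp :: "nat \<Rightarrow> (nat \<Rightarrow> real) \<Rightarrow> real" where
  "Cp N al = (\<Prod>j\<in>{1..N-1}. cos (al j))"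
definition Sp :: "nat \<Rightarrow> (nat \<Rightarrow> real) \<Rightarrow> real" where
  "Sp N al = (\<Prod>j\<in>{1..N-1}. sin (al j))"
definition Bt :: "nat \<Rightarrow> (nat \<Rightarrow> real) \<Rightarrow> real" where
  "Bt N ph = (\<Sum>j\<in>{1..N-1}. ph j)"
definition EE :: "nat \<Rightarrow> (nat \<Rightarrow> real) \<Rightarrow> (nat \<Rightarrow> real) \<Rightarrow> real \<Rightarrow> real \<Rightarrow> real" where
  "EE N al ph x y = (if even N then Cp N al * cos x else 0) + Sp N al * sin x * cos (Bt N ph + y)"

lemma expect_split: assumes "N \<ge> 2"
  shows "expect N (\<lambda>j. if j = N then bloch_op (dir x y) else bloch_op (dir (al j) (ph j))) (ghz N)
     = complex_of_real (EE N al ph x y)"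
proof -
  obtain m where m: "N = Suc m" "m \<ge> 1" using assms by (cases N) auto
  have f: "(\<lambda>j. if j = N then bloch_op (dir x y) else bloch_op (dir (al j) (ph j)))
      = (\<lambda>j. bloch_op (dir ((al(N:=x)) j) ((ph(N:=y)) j)))" by (auto simp: fun_eq_iff)
  have c: "(\<Prod>j\<in>{1..N}. cos ((al(N:=x)) j)) = Cp N al * cos x"
    unfolding m Cp_def by (simp add: prod.nat_ivl_Suc' mult.commute)
  have s: "(\<Prod>j\<in>{1..N}. sin ((al(N:=x)) j)) = Sp N al * sin x"
    unfolding m Sp_def by (simp add: prod.nat_ivl_Suc' mult.commute)
  have b: "(\<Sum>j\<in>{1..N}. (ph(N:=y)) j) = Bt N ph + y"
    unfolding m Bt_def by (simp add: sum.nat_ivl_Suc' add.commute)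
  have "expect N (\<lambda>j. bloch_op (dir ((al(N:=x)) j) ((ph(N:=y)) j))) (ghz N) =
    complex_of_real ((if even N then (\<Prod>j\<in>{1..N}. cos ((al(N:=x)) j)) else 0)
       + (\<Prod>j\<in>{1..N}. sin ((al(N:=x)) j)) * cos (\<Sum>j\<in>{1..N}. (ph(N:=y)) j))"
    by (rule expect_dir) (use assms in simp)
  then show ?thesis unfolding f c s b EE_def by simp
qed

lemma chshN_eq: assumes "N \<ge> 2"
  shows "chshN N al ph al' ph' = complex_of_real (EE N al ph (al N) (ph N) + EE N al ph (al' N) (ph' N)
     + EE N al' ph' (al N) (ph N) - EE N al' ph' (al' N) (ph' N))"
  unfolding chshN_def chsh_def UNIV_bool using expect_split[OF assms] by (simp cong: if_cong)

lemma bl_FF: "bloch_op u False False = complex_of_real (snd (snd u))"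
  by (simp add: bloch_op_def sigma_x_def sigma_y_def sigma_z_def)
lemma bl_TT: "bloch_op u True True = - complex_of_real (snd (snd u))"
  by (simp add: bloch_op_def sigma_x_def sigma_y_def sigma_z_def)
lemma bl_FT: "bloch_op u False True = complex_of_real (fst u) - \<i> * complex_of_real (fst (snd u))"
  by (simp add: bloch_op_def sigma_x_def sigma_y_def sigma_z_def)
lemma bl_TF: "bloch_op u True False = complex_of_real (fst u) + \<i> * complex_of_real (fst (snd u))"
  by (simp add: bloch_op_def sigma_x_def sigma_y_def sigma_z_def)

lemma expect2: "expect 2 (\<lambda>j. if j = 2 then bloch_op w else bloch_op u) (ghz 2) =
   complex_of_real (fst u * fst w - fst (snd u) * fst (snd w) + snd (snd u) * snd (snd w))"
proof -
  have i: "{1..2::nat} = {1,2}" by auto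
  have pr: "\<And>r c. (\<Prod>j\<in>{1..2::nat}. (if j = 2 then bloch_op w else bloch_op u) r c)
       = bloch_op u r c * bloch_op w r c"
    unfolding i by simp
  note e = expect_ghz[of 2 "\<lambda>j. if j = 2 then bloch_op w else bloch_op u", OF one_le_numeral]
  show ?thesis unfolding e pr bl_FF bl_TT bl_FT bl_TF
    by (simp add: complex_eq_iff)
qed

definition G2 :: "real \<times> real \<times> real \<Rightarrow> real \<times> real \<times> real \<Rightarrow> real" where
  "G2 u w = fst u * fst w - fst (snd u) * fst (snd w) + snd (snd u) * snd (snd w)"

lemma chsh2_eq:
  "chsh2 N al ph al' ph' = complex_of_real (
     G2 (redA N al ph) (redB N (al N) (ph N)) + G2 (redA N al ph) (redB N (al' N) (ph' N))
   + G2 (redA N al' ph') (redB N (al N) (ph N)) - G2 (redA N al' ph') (redB N (al' N) (ph' N)))"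
  unfolding chsh2_def chsh_def UNIV_bool G2_def using expect2 by (simp cong: if_cong)


lemma core:
  fixes x0 y0 z0 x1 y1 z1 a0 b0 c0 a1 b1 c1 :: real
  assumes U0: "x0\<^sup>2 + y0\<^sup>2 + z0\<^sup>2 \<le> 1" and U1: "x1\<^sup>2 + y1\<^sup>2 + z1\<^sup>2 \<le> 1"
    and V0: "a0\<^sup>2 + b0\<^sup>2 + c0\<^sup>2 \<le> 1" and V1: "a1\<^sup>2 + b1\<^sup>2 + c1\<^sup>2 \<le> 1"
    and I: "I = (x0*a0+y0*b0+z0*c0) + (x0*a1+y0*b1+z0*c1) + (x1*a0+y1*b0+z1*c0) - (x1*a1+y1*b1+z1*c1)"
  shows "I\<^sup>2 \<le> 8 \<and> (I\<^sup>2 = 8 \<longrightarrow> x0\<^sup>2 + y0\<^sup>2 + z0\<^sup>2 = 1 \<and> x1\<^sup>2 + y1\<^sup>2 + z1\<^sup>2 = 1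
      \<and> a0\<^sup>2 + b0\<^sup>2 + c0\<^sup>2 = 1 \<and> a1\<^sup>2 + b1\<^sup>2 + c1\<^sup>2 = 1)"
proof -
  define u0 where "u0 = x0\<^sup>2 + y0\<^sup>2 + z0\<^sup>2"
  define u1 where "u1 = x1\<^sup>2 + y1\<^sup>2 + z1\<^sup>2"
  define v0 where "v0 = a0\<^sup>2 + b0\<^sup>2 + c0\<^sup>2"
  define v1 where "v1 = a1\<^sup>2 + b1\<^sup>2 + c1\<^sup>2"
  define p where "p = x0*(a0+a1) + y0*(b0+b1) + z0*(c0+c1)"
  define q where "q = x1*(a0-a1) + y1*(b0-b1) + z1*(c0-c1)"
  define A where "A = (a0+a1)\<^sup>2 + (b0+b1)\<^sup>2 + (c0+c1)\<^sup>2"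
  define B where "B = (a0-a1)\<^sup>2 + (b0-b1)\<^sup>2 + (c0-c1)\<^sup>2"
  have Ip: "I = p + q" unfolding I p_def q_def by (simp add: algebra_simps)
  have AB: "A + B = 2*v0 + 2*v1" unfolding A_def B_def v0_def v1_def by algebra
  have A0: "A \<ge> 0" "B \<ge> 0" unfolding A_def B_def by simp_all
  have L1: "u0 * A - p\<^sup>2 = (x0*(b0+b1) - y0*(a0+a1))\<^sup>2 + (y0*(c0+c1) - z0*(b0+b1))\<^sup>2 + (z0*(a0+a1) - x0*(c0+c1))\<^sup>2"
    unfolding u0_def A_def p_def by algebra
  have L2: "u1 * B - q\<^sup>2 = (x1*(b0-b1) - y1*(a0-a1))\<^sup>2 + (y1*(c0-c1) - z1*(b0-b1))\<^sup>2 + (z1*(a0-a1) - x1*(c0-c1))\<^sup>2"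
    unfolding u1_def B_def q_def by algebra
  have pA: "p\<^sup>2 \<le> u0 * A" using L1 by (smt (verit) zero_le_power2)
  have qB: "q\<^sup>2 \<le> u1 * B" using L2 by (smt (verit) zero_le_power2)
  have uA: "u0 * A \<le> A" using mult_right_mono[OF U0[folded u0_def] A0(1)] by simp
  have uB: "u1 * B \<le> B" using mult_right_mono[OF U1[folded u1_def] A0(2)] by simp
  have pq: "(p+q)\<^sup>2 + (p-q)\<^sup>2 = 2*p\<^sup>2 + 2*q\<^sup>2" by algebra
  have pq0: "(p-q)\<^sup>2 \<ge> 0" by simp
  have v0: "v0 \<le> 1" "v1 \<le> 1" using V0 V1 unfolding v0_def v1_def by auto
  have le: "I\<^sup>2 \<le> 8" unfolding Ip using pA qB uA uB pq pq0 AB v0 by linarith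
  moreover have "I\<^sup>2 = 8 \<longrightarrow> u0 = 1 \<and> u1 = 1 \<and> v0 = 1 \<and> v1 = 1"
  proof
    assume e: "I\<^sup>2 = 8"
    have "(p-q)\<^sup>2 = 0" using e unfolding Ip using pA qB uA uB pq pq0 AB v0 by linarith
    then have pqe: "p = q" by simp
    have "p\<^sup>2 + q\<^sup>2 = 4" using e unfolding Ip using pA qB uA uB pq pq0 AB v0 by linarith
    then have p2: "p\<^sup>2 = 2" "q\<^sup>2 = 2" using pqe by auto
    have eqA: "u0 * A = A" "u1 * B = B" using e unfolding Ip using pA qB uA uB pq pq0 AB v0 by linarith+
    have "A > 0" using p2 pA uA by linarith
    then have "u0 = 1" using eqA(1) by simp
    moreover have "B > 0" using p2 qB uB by linarith
    then have "u1 = 1" using eqA(2) by simp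
    moreover have "v0 = 1" "v1 = 1" using e unfolding Ip using pA qB uA uB pq pq0 AB v0 by linarith+
    ultimately show "u0 = 1 \<and> u1 = 1 \<and> v0 = 1 \<and> v1 = 1" by simp
  qed
  ultimately show ?thesis unfolding u0_def u1_def v0_def v1_def by blast
qed

lemma abs_prod_le1: "\<forall>j\<in>A. \<bar>f j\<bar> \<le> (1::real) \<Longrightarrow> \<bar>prod f A\<bar> \<le> 1"
  by (simp add: abs_prod prod_le_1)

lemma SC_le: fixes m :: nat and al :: "nat \<Rightarrow> real" assumes "m \<ge> 1"
  shows "(\<Prod>j\<in>{1..m}. cos (al j))\<^sup>2 + (\<Prod>j\<in>{1..m}. sin (al j))\<^sup>2 \<le> 1"
proof -
  define C where "C = (\<Prod>j\<in>{Suc 1..m}. cos (al j))"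
  define S where "S = (\<Prod>j\<in>{Suc 1..m}. sin (al j))"
  have c: "(\<Prod>j\<in>{1..m}. cos (al j)) = cos (al 1) * C" unfolding C_def using assms
    by (simp add: prod.atLeast_Suc_atMost)
  have s: "(\<Prod>j\<in>{1..m}. sin (al j)) = sin (al 1) * S" unfolding S_def using assms
    by (simp add: prod.atLeast_Suc_atMost)
  have "\<bar>C\<bar> \<le> 1" unfolding C_def by (rule abs_prod_le1) simp
  then have C1: "C\<^sup>2 \<le> 1" by (simp add: abs_square_le_1)
  have "\<bar>S\<bar> \<le> 1" unfolding S_def by (rule abs_prod_le1) simp
  then have S1: "S\<^sup>2 \<le> 1" by (simp add: abs_square_le_1)
  have "(cos (al 1))\<^sup>2 * C\<^sup>2 \<le> (cos (al 1))\<^sup>2" using mult_left_mono[OF C1, of "(cos (al 1))\<^sup>2"] by simp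
  moreover have "(sin (al 1))\<^sup>2 * S\<^sup>2 \<le> (sin (al 1))\<^sup>2" using mult_left_mono[OF S1, of "(sin (al 1))\<^sup>2"] by simp
  ultimately show ?thesis unfolding c s power_mult_distrib using sin_cos_squared_add[of "al 1"] by linarith
qed



lemma EE_dot: "EE N al ph x y = (Sp N al * cos (Bt N ph)) * (sin x * cos y)
   + (- Sp N al * sin (Bt N ph)) * (sin x * sin y)
   + (if even N then Cp N al else 0) * (if even N then cos x else 0)"
proof (cases "even N")
  case True
  have "EE N al ph x y = Cp N al * cos x + Sp N al * sin x * (cos (Bt N ph) * cos y - sin (Bt N ph) * sin y)"
    unfolding EE_def cos_add using True by simp
  then show ?thesis unfolding if_P[OF True] by (simp add: algebra_simps)
next
  case False
  have "EE N al ph x y = Sp N al * sin x * (cos (Bt N ph) * cos y - sin (Bt N ph) * sin y)"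
    unfolding EE_def cos_add using False by simp
  then show ?thesis unfolding if_not_P[OF False] by (simp add: algebra_simps)
qed

lemma vnorm: "(S * cos B)\<^sup>2 + (- S * sin B)\<^sup>2 + (if e then C else 0)\<^sup>2 = S\<^sup>2 + (if e then C\<^sup>2 else (0::real))"
proof -
  have "(S * cos B)\<^sup>2 + (- S * sin B)\<^sup>2 = S\<^sup>2 * ((sin B)\<^sup>2 + (cos B)\<^sup>2)"
    by algebra
  also have "\<dots> = S\<^sup>2" by (simp only: sin_cos_squared_add mult_1_right)
  finally show ?thesis by (cases e) simp_all
qed
lemma vnorm2: "(s * cos B)\<^sup>2 + (s * sin B)\<^sup>2 + (if e then C else 0)\<^sup>2 = s\<^sup>2 + (if e then C\<^sup>2 else (0::real))"
proof -
  have "(s * cos B)\<^sup>2 + (s * sin B)\<^sup>2 = s\<^sup>2 * ((sin B)\<^sup>2 + (cos B)\<^sup>2)"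
    by algebra
  also have "\<dots> = s\<^sup>2" by (simp only: sin_cos_squared_add mult_1_right)
  finally show ?thesis by (cases e) simp_all
qed
lemma SC_N: assumes "N \<ge> 3" shows "(Cp N al)\<^sup>2 + (Sp N al)\<^sup>2 \<le> 1"
  unfolding Cp_def Sp_def by (rule SC_le) (use assms in simp)

lemma Gmatch: assumes "Dval N al = 1" "odd N \<longrightarrow> sin x = 1"
  shows "G2 (redA N al ph) (redB N x y) = EE N al ph x y"
proof -
  have r: "redA N al ph = (Sp N al * cos (Bt N ph), Sp N al * sin (Bt N ph), Cp N al)"
    unfolding redA_def Let_def assms(1) Sp_def Cp_def Bt_def by simp
  show ?thesis
  proof (cases "even N")
    case True
    then show ?thesis by (simp add: G2_def r redB_def dir_def EE_def cos_add algebra_simps)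
  next
    case False
    then show ?thesis using assms(2) by (simp add: G2_def r redB_def dir_def EE_def cos_add algebra_simps)
  qed
qed

lemma ifsq: "(if e then (C::real)\<^sup>2 else 0) \<le> C\<^sup>2" by simp

lemma Dlem: "S\<^sup>2 + (if e then C\<^sup>2 else 0) = 1 \<Longrightarrow> C\<^sup>2 + S\<^sup>2 \<le> 1 \<Longrightarrow> C\<^sup>2 + S\<^sup>2 = (1::real)"
proof (cases e)
  case True
  then show "S\<^sup>2 + (if e then C\<^sup>2 else 0) = 1 \<Longrightarrow> C\<^sup>2 + S\<^sup>2 \<le> 1 \<Longrightarrow> C\<^sup>2 + S\<^sup>2 = (1::real)" by simp
next
  case False
  have "C\<^sup>2 \<ge> 0" by simp
  then show "S\<^sup>2 + (if e then C\<^sup>2 else 0) = 1 \<Longrightarrow> C\<^sup>2 + S\<^sup>2 \<le> 1 \<Longrightarrow> C\<^sup>2 + S\<^sup>2 = (1::real)" using False by simp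
qed
lemma slem: "s\<^sup>2 + (if e then c\<^sup>2 else 0) = 1 \<Longrightarrow> \<not> e \<Longrightarrow> s \<ge> 0 \<Longrightarrow> s = (1::real)"
proof -
  assume a: "s\<^sup>2 + (if e then c\<^sup>2 else 0) = 1" "\<not> e" "s \<ge> 0"
  then have "s\<^sup>2 = 1" by simp
  then have "s = 1 \<or> s = -1" by (simp add: power2_eq_1_iff)
  then show "s = 1" using a(3) by linarith
qed

lemma sq8: "(I::real)\<^sup>2 \<le> 8 \<Longrightarrow> \<bar>I\<bar> \<le> 2 * sqrt 2"
  by (rule power2_le_imp_le) (simp_all add: power_mult_distrib)

theorem mainTheorem2:
  fixes N :: nat and al ph al' ph' :: "nat \<Rightarrow> real"
  assumes "N \<ge> 3"
    and "\<forall>j\<in>{1..N}. al j \<in> {0..pi} \<and> al' j \<in> {0..pi}"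
  shows "cmod (chshN N al ph al' ph') \<le> 2 * sqrt 2 \<and>
         (ND N al al' \<and>
          (chshN N al ph al' ph' = complex_of_real (2 * sqrt 2) \<or>
           chshN N al ph al' ph' = complex_of_real (- 2 * sqrt 2)) \<longrightarrow>
          chsh2 N al ph al' ph' = chshN N al ph al' ph')"
proof -
  have N2: "N \<ge> 2" using assms(1) by simp
  define e where "e = even N"
  define x0 where "x0 = Sp N al * cos (Bt N ph)"
  define y0 where "y0 = - Sp N al * sin (Bt N ph)"
  define z0 where "z0 = (if e then Cp N al else 0)"
  define x1 where "x1 = Sp N al' * cos (Bt N ph')"
  define y1 where "y1 = - Sp N al' * sin (Bt N ph')"
  define z1 where "z1 = (if e then Cp N al' else 0)"
  define a0 where "a0 = sin (al N) * cos (ph N)"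
  define b0 where "b0 = sin (al N) * sin (ph N)"
  define c0 where "c0 = (if e then cos (al N) else 0)"
  define a1 where "a1 = sin (al' N) * cos (ph' N)"
  define b1 where "b1 = sin (al' N) * sin (ph' N)"
  define c1 where "c1 = (if e then cos (al' N) else 0)"
  define I where "I = (x0*a0+y0*b0+z0*c0) + (x0*a1+y0*b1+z0*c1) + (x1*a0+y1*b0+z1*c0) - (x1*a1+y1*b1+z1*c1)"
  have chI: "chshN N al ph al' ph' = complex_of_real I"
    unfolding chshN_eq[OF N2] EE_dot I_def x0_def y0_def z0_def x1_def y1_def z1_def
      a0_def b0_def c0_def a1_def b1_def c1_def e_def by (simp add: mult.assoc)
  have nU0: "x0\<^sup>2 + y0\<^sup>2 + z0\<^sup>2 = (Sp N al)\<^sup>2 + (if e then (Cp N al)\<^sup>2 else 0)"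
    unfolding x0_def y0_def z0_def by (rule vnorm)
  have nU1: "x1\<^sup>2 + y1\<^sup>2 + z1\<^sup>2 = (Sp N al')\<^sup>2 + (if e then (Cp N al')\<^sup>2 else 0)"
    unfolding x1_def y1_def z1_def by (rule vnorm)
  have nV0: "a0\<^sup>2 + b0\<^sup>2 + c0\<^sup>2 = (sin (al N))\<^sup>2 + (if e then (cos (al N))\<^sup>2 else 0)"
    unfolding a0_def b0_def c0_def by (rule vnorm2)
  have nV1: "a1\<^sup>2 + b1\<^sup>2 + c1\<^sup>2 = (sin (al' N))\<^sup>2 + (if e then (cos (al' N))\<^sup>2 else 0)"
    unfolding a1_def b1_def c1_def by (rule vnorm2)
  have SC0: "(Cp N al)\<^sup>2 + (Sp N al)\<^sup>2 \<le> 1" by (rule SC_N[OF assms(1)])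
  have SC1: "(Cp N al')\<^sup>2 + (Sp N al')\<^sup>2 \<le> 1" by (rule SC_N[OF assms(1)])
  have sc0: "(sin (al N))\<^sup>2 + (cos (al N))\<^sup>2 = 1" by (rule sin_cos_squared_add)
  have sc1: "(sin (al' N))\<^sup>2 + (cos (al' N))\<^sup>2 = 1" by (rule sin_cos_squared_add)
  have U0: "x0\<^sup>2 + y0\<^sup>2 + z0\<^sup>2 \<le> 1" using nU0 SC0 ifsq[of e "Cp N al"] by linarith
  have U1: "x1\<^sup>2 + y1\<^sup>2 + z1\<^sup>2 \<le> 1" using nU1 SC1 ifsq[of e "Cp N al'"] by linarith
  have V0: "a0\<^sup>2 + b0\<^sup>2 + c0\<^sup>2 \<le> 1" using nV0 sc0 ifsq[of e "cos (al N)"] by linarith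
  have V1: "a1\<^sup>2 + b1\<^sup>2 + c1\<^sup>2 \<le> 1" using nV1 sc1 ifsq[of e "cos (al' N)"] by linarith
  note C = core[OF U0 U1 V0 V1 I_def]
  have part1: "cmod (chshN N al ph al' ph') \<le> 2 * sqrt 2"
    unfolding chI norm_of_real using C sq8 by blast
  have part2: "chsh2 N al ph al' ph' = chshN N al ph al' ph'"
    if h: "chshN N al ph al' ph' = complex_of_real (2 * sqrt 2) \<or>
           chshN N al ph al' ph' = complex_of_real (- 2 * sqrt 2)"
  proof -
    have "I = 2 * sqrt 2 \<or> I = - 2 * sqrt 2" using h unfolding chI of_real_eq_iff .
    then have "I\<^sup>2 = 8" by (auto simp: power_mult_distrib)
    then have eqs: "x0\<^sup>2 + y0\<^sup>2 + z0\<^sup>2 = 1" "x1\<^sup>2 + y1\<^sup>2 + z1\<^sup>2 = 1"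
       "a0\<^sup>2 + b0\<^sup>2 + c0\<^sup>2 = 1" "a1\<^sup>2 + b1\<^sup>2 + c1\<^sup>2 = 1" using C by blast+
    have "N \<in> {1..N}" using assms(1) by simp
    from bspec[OF assms(2) this] have rN: "0 \<le> al N" "al N \<le> pi" "0 \<le> al' N" "al' N \<le> pi" by simp_all
    have D0: "Dval N al = 1" unfolding Dval_def Cp_def[symmetric] Sp_def[symmetric]
      using eqs(1) SC0 unfolding nU0 by (rule Dlem)
    have D1: "Dval N al' = 1" unfolding Dval_def Cp_def[symmetric] Sp_def[symmetric]
      using eqs(2) SC1 unfolding nU1 by (rule Dlem)
    have s0: "odd N \<longrightarrow> sin (al N) = 1"
    proof
      assume o: "odd N"
      have "\<not> e" using o unfolding e_def by simp
      moreover have "sin (al N) \<ge> 0" using rN by (intro sin_ge_zero) simp_all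
      ultimately show "sin (al N) = 1" by (rule slem[OF eqs(3)[unfolded nV0]])
    qed
    have s1: "odd N \<longrightarrow> sin (al' N) = 1"
    proof
      assume o: "odd N"
      have "\<not> e" using o unfolding e_def by simp
      moreover have "sin (al' N) \<ge> 0" using rN by (intro sin_ge_zero) simp_all
      ultimately show "sin (al' N) = 1" by (rule slem[OF eqs(4)[unfolded nV1]])
    qed
    note g = Gmatch[OF D0 s0] Gmatch[OF D0 s1] Gmatch[OF D1 s0] Gmatch[OF D1 s1]
    show ?thesis unfolding chshN_eq[OF N2] chsh2_eq g by (rule refl)
  qed
  show ?thesis
  proof (intro conjI impI)
    show "cmod (chshN N al ph al' ph') \<le> 2 * sqrt 2" by (rule part1)
  next
    assume h: "ND N al al' \<and>
          (chshN N al ph al' ph' = complex_of_real (2 * sqrt 2) \<or>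
           chshN N al ph al' ph' = complex_of_real (- 2 * sqrt 2))"
    show "chsh2 N al ph al' ph' = chshN N al ph al' ph'" by (rule part2) (rule conjunct2[OF h])
  qed
qed

end
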